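(* Let $\alpha>0$, $\alpha\ne1$, let $U\in\mathcal{U}(d)$ and let $\Phi(Y)=UYU^\dagger$ be the corresponding unitary channel, with Choi state $\rho_\Phi=\frac1d\sum_{i,j=0}^{d-1}\Phi(|i\rangle\langle j|)\otimes|i\rangle\langle j|$ on $\mathbb{C}^d\otimes\mathbb{C}^d$. Then $H_\alpha(U)=\frac{1}{\alpha-1}\big(1-e^{-(\alpha-1)M_\alpha(\rho_\Phi)}\big)$.
   Context: Let $d_L\ge 2$, $n\ge1$, $d=d_L^n$, with computational basis $\{|i\rangle\}$ of $\mathbb{C}^d$. On $\mathbb{C}^{d_L}$ let $Z|k\rangle=\omega^k|k\rangle$, $X|k\rangle=|k+1\rangle$ (mod $d_L$), $\omega=e^{2\pi i/d_L}$, $\tau=-e^{i\pi/d_L}$, $D_{(a_1,a_2)}=\tau^{a_1a_2}X^{a_1}Z^{a_2}$, and for $\mathbf a=\mathbf a_1\oplus\cdots\oplus\mathbf a_n\in\mathbb{Z}_{d_L}^{2n}$ let $D_{\mathbf a}=D_{\mathbf a_1}\otimes\cdots\otimes D_{\mathbf a_n}$. The $\alpha$-Clifford entropy of $U$ is $H_\alpha(U)=\frac{1}{\alpha-1}\Big(1-\frac{1}{d^2}\sum_{\mathbf a,\mathbf b}\big|\tfrac1d\operatorname{tr}(D_{\mathbf a}^\dagger UD_{\mathbf b}U^\dagger)\big|^{2\alpha}\Big)$. For a pure state $\rho$ on $\mathbb{C}^d\otimes\mathbb{C}^d$, define $\chi_{\mathbf{ab}}(\rho)=\frac{1}{d^2}\big|\operatorname{tr}\big((D_{\mathbf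 a}^\dagger\otimes D_{\mathbf b}^\dagger)\rho\big)\big|^2$ (a probability distribution over $(\mathbf a,\mathbf b)$) and the (bipartite) stabilizer Rényi entropy $M_\alpha(\rho)=\frac{1}{1-\alpha}\ln\sum_{\mathbf a,\mathbf b}\chi_{\mathbf{ab}}(\rho)^\alpha-\ln(d^2)$. *)

theory Defs
  imports Complex_Main "HOL-Library.FuncSet"
begin

text \<open>Matrices on C^d are represented as functions nat => nat => complex, only
  the entries with indices < d being relevant.  Operators on C^d (x) C^d are
  functions on index pairs (p,q), p,q < d, with |p,q> = |p> (x) |q>.\<close>

definition mmult :: "nat \<Rightarrow> (nat \<Rightarrow> nat \<Rightarrow> complex) \<Rightarrow> (nat \<Rightarrow> nat \<Rightarrow> complex) \<Rightarrow> nat \<Rightarrow> nat \<Rightarrow> complex" where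
  "mmult d A B = (\<lambda>i j. \<Sum>k<d. A i k * B k j)"

definition madj :: "(nat \<Rightarrow> nat \<Rightarrow> complex) \<Rightarrow> nat \<Rightarrow> nat \<Rightarrow> complex" where
  "madj A = (\<lambda>i j. cnj (A j i))"

definition mtrace :: "nat \<Rightarrow> (nat \<Rightarrow> nat \<Rightarrow> complex) \<Rightarrow> complex" where
  "mtrace d A = (\<Sum>i<d. A i i)"

definition idm :: "nat \<Rightarrow> nat \<Rightarrow> complex" where
  "idm = (\<lambda>i j. if i = j then 1 else 0)"

definition unitary_mat :: "nat \<Rightarrow> (nat \<Rightarrow> nat \<Rightarrow> complex) \<Rightarrow> bool" where
  "unitary_mat d U \<longleftrightarrow>
     (\<forall>i<d. \<forall>j<d. mmult d U (madj U) i j = idm i j \<and> mmult d (madj U) U i j = idm i j)"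

definition ket_bra :: "nat \<Rightarrow> nat \<Rightarrow> nat \<Rightarrow> nat \<Rightarrow> complex" where
  "ket_bra i j = (\<lambda>x y. if x = i \<and> y = j then 1 else 0)"

definition unitary_channel :: "nat \<Rightarrow> (nat \<Rightarrow> nat \<Rightarrow> complex) \<Rightarrow> (nat \<Rightarrow> nat \<Rightarrow> complex) \<Rightarrow> nat \<Rightarrow> nat \<Rightarrow> complex" where
  "unitary_channel d U Y = mmult d (mmult d U Y) (madj U)"

definition tensor :: "(nat \<Rightarrow> nat \<Rightarrow> complex) \<Rightarrow> (nat \<Rightarrow> nat \<Rightarrow> complex) \<Rightarrow> nat \<times> nat \<Rightarrow> nat \<times> nat \<Rightarrow> complex" where
  "tensor A B = (\<lambda>(p,q) (p',q'). A p p' * B q q')"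

definition choi :: "nat \<Rightarrow> ((nat \<Rightarrow> nat \<Rightarrow> complex) \<Rightarrow> nat \<Rightarrow> nat \<Rightarrow> complex) \<Rightarrow> nat \<times> nat \<Rightarrow> nat \<times> nat \<Rightarrow> complex" where
  "choi d \<Phi> = (\<lambda>x y. (1 / of_nat d) * (\<Sum>i<d. \<Sum>j<d. tensor (\<Phi> (ket_bra i j)) (ket_bra i j) x y))"

definition mmult2 :: "nat \<Rightarrow> (nat \<times> nat \<Rightarrow> nat \<times> nat \<Rightarrow> complex) \<Rightarrow> (nat \<times> nat \<Rightarrow> nat \<times> nat \<Rightarrow> complex) \<Rightarrow> nat \<times> nat \<Rightarrow> nat \<times> nat \<Rightarrow> complex" where
  "mmult2 d A B = (\<lambda>x y. \<Sum>p<d. \<Sum>q<d. A x (p,q) * B (p,q) y)"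

definition mtrace2 :: "nat \<Rightarrow> (nat \<times> nat \<Rightarrow> nat \<times> nat \<Rightarrow> complex) \<Rightarrow> complex" where
  "mtrace2 d A = (\<Sum>p<d. \<Sum>q<d. A (p,q) (p,q))"

definition omega :: "nat \<Rightarrow> complex" where
  "omega dL = exp (2 * of_real pi * \<i> / of_nat dL)"

definition tau :: "nat \<Rightarrow> complex" where
  "tau dL = - exp (of_real pi * \<i> / of_nat dL)"

definition Xop :: "nat \<Rightarrow> nat \<Rightarrow> nat \<Rightarrow> complex" where
  "Xop dL = (\<lambda>x y. if x = (y + 1) mod dL then 1 else 0)"

definition Zop :: "nat \<Rightarrow> nat \<Rightarrow> nat \<Rightarrow> complex" where
  "Zop dL = (\<lambda>x y. if x = y then omega dL ^ y else 0)"

definition mpow :: "nat \<Rightarrow> (nat \<Rightarrow> nat \<Rightarrow> complex) \<Rightarrow> nat \<Rightarrow> nat \<Rightarrow> nat \<Rightarrow> complex" where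
  "mpow d A k = ((\<lambda>B. mmult d A B) ^^ k) idm"

definition D1 :: "nat \<Rightarrow> nat \<times> nat \<Rightarrow> nat \<Rightarrow> nat \<Rightarrow> complex" where
  "D1 dL a = (\<lambda>x y. tau dL ^ (fst a * snd a) *
      mmult dL (mpow dL (Xop dL) (fst a)) (mpow dL (Zop dL) (snd a)) x y)"

text \<open>Digit of the k-th tensor factor (factor 0 = most significant digit) of a
  basis index i < dL^n.\<close>
definition digit :: "nat \<Rightarrow> nat \<Rightarrow> nat \<Rightarrow> nat \<Rightarrow> nat" where
  "digit dL n k i = (i div dL ^ (n - 1 - k)) mod dL"

text \<open>Elements of Z_dL^{2n}: a = a_1 (+) ... (+) a_n with a_k in Z_dL^2.\<close>
definition pauli_labels :: "nat \<Rightarrow> nat \<Rightarrow> (nat \<Rightarrow> nat \<times> nat) set" where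
  "pauli_labels dL n = PiE {..<n} (\<lambda>_. {..<dL} \<times> {..<dL})"

definition Weyl :: "nat \<Rightarrow> nat \<Rightarrow> (nat \<Rightarrow> nat \<times> nat) \<Rightarrow> nat \<Rightarrow> nat \<Rightarrow> complex" where
  "Weyl dL n a = (\<lambda>i j. \<Prod>k<n. D1 dL (a k) (digit dL n k i) (digit dL n k j))"

definition clifford_entropy :: "nat \<Rightarrow> nat \<Rightarrow> real \<Rightarrow> (nat \<Rightarrow> nat \<Rightarrow> complex) \<Rightarrow> real" where
  "clifford_entropy dL n \<alpha> U =
     (let d = dL ^ n in
      1 / (\<alpha> - 1) * (1 - 1 / (real d)^2 *
        (\<Sum>a\<in>pauli_labels dL n. \<Sum>b\<in>pauli_labels dL n.
          cmod (1 / of_nat d * mtrace d (mmult d (madj (Weyl dL n a))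
             (mmult d U (mmult d (Weyl dL n b) (madj U))))) powr (2 * \<alpha>))))"

definition chi :: "nat \<Rightarrow> nat \<Rightarrow> (nat \<times> nat \<Rightarrow> nat \<times> nat \<Rightarrow> complex) \<Rightarrow> (nat \<Rightarrow> nat \<times> nat) \<Rightarrow> (nat \<Rightarrow> nat \<times> nat) \<Rightarrow> real" where
  "chi dL n \<rho> a b =
     (let d = dL ^ n in
      1 / (real d)^2 * (cmod (mtrace2 d (mmult2 d (tensor (madj (Weyl dL n a)) (madj (Weyl dL n b))) \<rho>)))^2)"

definition stab_renyi :: "nat \<Rightarrow> nat \<Rightarrow> real \<Rightarrow> (nat \<times> nat \<Rightarrow> nat \<times> nat \<Rightarrow> complex) \<Rightarrow> real" where
  "stab_renyi dL n \<alpha> \<rho> =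
     1 / (1 - \<alpha>) * ln (\<Sum>a\<in>pauli_labels dL n. \<Sum>b\<in>pauli_labels dL n. chi dL n \<rho> a b powr \<alpha>)
     - ln ((real (dL ^ n))^2)"

end

theory Submission
  imports Defs
begin

lemma mpow_0: "mpow d A 0 = idm" by (simp add: mpow_def)
lemma mpow_Suc: "mpow d A (Suc k) = mmult d A (mpow d A k)" by (simp add: mpow_def)

lemma mpow_X:
  assumes "x < dL" "y < dL"
  shows "mpow dL (Xop dL) k x y = (if x = (y + k) mod dL then 1 else 0)"
  using assms(1)
proof (induction k arbitrary: x)
  case 0
  then show ?case using assms by (simp add: mpow_0 idm_def)
next
  case (Suc k)
  have "mpow dL (Xop dL) (Suc k) x y
      = (\<Sum>m<dL. (if m = (y + k) mod dL then (if x = (m + 1) mod dL then 1 else 0) else 0))"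
    unfolding mpow_Suc mmult_def
  proof (rule sum.cong)
    fix m assume "m \<in> {..<dL}"
    then have "mpow dL (Xop dL) k m y = (if m = (y + k) mod dL then 1 else 0)" by (simp add: Suc.IH)
    then show "Xop dL x m * mpow dL (Xop dL) k m y = (if m = (y + k) mod dL then (if x = (m + 1) mod dL then 1 else 0) else 0)"
      by (simp add: Xop_def)
  qed simp
  also have "\<dots> = (if x = ((y + k) mod dL + 1) mod dL then 1 else 0)"
    using assms by (simp add: sum.delta)
  also have "((y + k) mod dL + 1) mod dL = (y + Suc k) mod dL"
    by (simp add: mod_Suc_eq)
  finally show ?case .
qed

lemma mpow_Z:
  assumes "x < dL" "y < dL"
  shows "mpow dL (Zop dL) k x y = (if x = y then omega dL ^ (k * y) else 0)"
  using assms(1)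
proof (induction k arbitrary: x)
  case 0
  then show ?case using assms by (simp add: mpow_0 idm_def)
next
  case (Suc k)
  have "mpow dL (Zop dL) (Suc k) x y
      = (\<Sum>m<dL. (if m = x then (if x = y then omega dL ^ x * omega dL ^ (k * y) else 0) else 0))"
    unfolding mpow_Suc mmult_def
  proof (rule sum.cong)
    fix m assume "m \<in> {..<dL}"
    then have "mpow dL (Zop dL) k m y = (if m = y then omega dL ^ (k * y) else 0)" by (simp add: Suc.IH)
    then show "Zop dL x m * mpow dL (Zop dL) k m y = (if m = x then (if x = y then omega dL ^ x * omega dL ^ (k * y) else 0) else 0)"
      by (simp add: Zop_def)
  qed simp
  also have "\<dots> = (if x = y then omega dL ^ (Suc k * y) else 0)"
    using Suc.prems by (simp add: sum.delta power_add)
  finally show ?case .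
qed

lemma D1_eq:
  assumes "x < dL" "y < dL"
  shows "D1 dL a x y = tau dL ^ (fst a * snd a) *
     (if x = (y + fst a) mod dL then omega dL ^ (snd a * y) else 0)"
proof -
  have "mmult dL (mpow dL (Xop dL) (fst a)) (mpow dL (Zop dL) (snd a)) x y
     = (\<Sum>m<dL. if m = y then (if x = (y + fst a) mod dL then omega dL ^ (snd a * y) else 0) else 0)"
    unfolding mmult_def by (rule sum.cong) (auto simp: mpow_X mpow_Z assms)
  also have "\<dots> = (if x = (y + fst a) mod dL then omega dL ^ (snd a * y) else 0)"
    using assms by (simp add: sum.delta)
  finally show ?thesis by (simp add: D1_def)
qed

lemma cmod_omega: "dL > 0 \<Longrightarrow> cmod (omega dL) = 1"
  unfolding omega_def by (simp add: norm_exp_eq_Re)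
lemma cmod_tau: "cmod (tau dL) = 1"
  unfolding tau_def by (simp add: norm_exp_eq_Re)
lemma omega_pow_dL: "dL > 0 \<Longrightarrow> omega dL ^ dL = 1"
proof -
  assume "dL > 0"
  have "omega dL ^ dL = exp (of_nat dL * (2 * of_real pi * \<i> / of_nat dL))"
    unfolding omega_def by (simp add: exp_of_nat_mult[symmetric])
  also have "\<dots> = exp (2 * of_real pi * \<i>)" using \<open>dL > 0\<close> by simp
  finally show ?thesis by simp
qed

definition flip :: "nat \<Rightarrow> nat \<times> nat \<Rightarrow> nat \<times> nat" where
  "flip dL a = (fst a, (dL - snd a) mod dL)"

definition theta :: "nat \<Rightarrow> nat \<times> nat \<Rightarrow> complex" where
  "theta dL a = cnj (tau dL) ^ (fst a * snd a) / tau dL ^ (fst a * snd (flip dL a))"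

lemma cmod_theta: "cmod (theta dL a) = 1"
  by (simp add: theta_def norm_divide norm_power cmod_tau)

lemma cnj_unit: "cmod z = 1 \<Longrightarrow> cnj z * z = 1"
  by (metis complex_norm_square mult.commute of_real_1 power_one)

lemma cnj_omega_pow:
  assumes "dL > 0" "c < dL"
  shows "cnj (omega dL ^ (c * y)) = omega dL ^ (((dL - c) mod dL) * y)"
proof -
  have s: "c + (dL - c) mod dL = (if c = 0 then 0 else dL)"
    using assms by (auto simp: mod_if)
  have "omega dL ^ (c * y) * omega dL ^ (((dL - c) mod dL) * y) = 1"
  proof -
    have "omega dL ^ (c * y) * omega dL ^ (((dL - c) mod dL) * y)
        = omega dL ^ ((c + (dL - c) mod dL) * y)"
      by (simp add: power_add add_mult_distrib)
    also have "\<dots> = 1" using s omega_pow_dL[OF assms(1)]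
      by (simp add: power_mult)
    finally show ?thesis .
  qed
  moreover have "cnj (omega dL ^ (c * y)) * omega dL ^ (c * y) = 1"
    by (rule cnj_unit) (simp add: norm_power cmod_omega assms)
  ultimately show ?thesis
    by (metis mult.assoc mult_1 mult.commute)
qed

lemma D1_cnj:
  assumes "x < dL" "y < dL" "snd a < dL"
  shows "cnj (D1 dL a x y) = theta dL a * D1 dL (flip dL a) x y"
proof -
  have dL: "dL > 0" using assms by simp
  have nz: "tau dL \<noteq> 0"
    using cmod_tau[of dL] by auto
  show ?thesis
    unfolding D1_eq[OF assms(1,2)]
    using nz cnj_omega_pow[OF dL assms(3), of y]
    by (simp add: theta_def flip_def)
qed

definition fl :: "nat \<Rightarrow> nat \<Rightarrow> (nat \<Rightarrow> nat \<times> nat) \<Rightarrow> nat \<Rightarrow> nat \<times> nat" where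
  "fl dL n b = restrict (\<lambda>k. flip dL (b k)) {..<n}"

definition Theta :: "nat \<Rightarrow> nat \<Rightarrow> (nat \<Rightarrow> nat \<times> nat) \<Rightarrow> complex" where
  "Theta dL n b = (\<Prod>k<n. theta dL (b k))"

lemma cmod_Theta: "cmod (Theta dL n b) = 1"
  by (simp add: Theta_def prod_norm[symmetric] cmod_theta)

lemma digit_lt: "dL > 0 \<Longrightarrow> digit dL n k i < dL"
  by (simp add: digit_def)

lemma Weyl_cnj:
  assumes "dL > 0" "b \<in> pauli_labels dL n"
  shows "cnj (Weyl dL n b i j) = Theta dL n b * Weyl dL n (fl dL n b) i j"
proof -
  have "cnj (Weyl dL n b i j) = (\<Prod>k<n. cnj (D1 dL (b k) (digit dL n k i) (digit dL n k j)))"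
    by (simp add: Weyl_def cnj_prod)
  also have "\<dots> = (\<Prod>k<n. theta dL (b k) * D1 dL (fl dL n b k) (digit dL n k i) (digit dL n k j))"
  proof (rule prod.cong)
    fix k assume k: "k \<in> {..<n}"
    then have "snd (b k) < dL" using assms(2) by (auto simp: pauli_labels_def PiE_def Pi_def)
    then show "cnj (D1 dL (b k) (digit dL n k i) (digit dL n k j)) =
      theta dL (b k) * D1 dL (fl dL n b k) (digit dL n k i) (digit dL n k j)"
      using k by (simp add: D1_cnj digit_lt assms(1) fl_def)
  qed simp
  also have "\<dots> = Theta dL n b * Weyl dL n (fl dL n b) i j"
    by (simp add: prod.distrib Theta_def Weyl_def)
  finally show ?thesis .
qed

lemma flip_flip: "snd a < dL \<Longrightarrow> flip dL (flip dL a) = a"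
  by (cases a) (auto simp: flip_def mod_if)

lemma flip_in: "dL > 0 \<Longrightarrow> a \<in> {..<dL} \<times> {..<dL} \<Longrightarrow> flip dL a \<in> {..<dL} \<times> {..<dL}"
  by (cases a) (auto simp: flip_def)

lemma fl_in: "dL > 0 \<Longrightarrow> b \<in> pauli_labels dL n \<Longrightarrow> fl dL n b \<in> pauli_labels dL n"
  by (auto simp: pauli_labels_def fl_def PiE_def Pi_def flip_def)

lemma fl_fl: "b \<in> pauli_labels dL n \<Longrightarrow> fl dL n (fl dL n b) = b"
  by (rule ext) (auto simp: pauli_labels_def fl_def PiE_def Pi_def extensional_def flip_flip)

lemma sum_fl: "dL > 0 \<Longrightarrow> (\<Sum>b\<in>pauli_labels dL n. g (fl dL n b)) = (\<Sum>b\<in>pauli_labels dL n. g b)"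
  by (rule sum.reindex_bij_witness[where i="fl dL n" and j="fl dL n"]) (auto simp: fl_in fl_fl)

lemma digits_inj:
  fixes dL i j :: nat
  assumes "dL > 0"
  shows "i < dL ^ n \<Longrightarrow> j < dL ^ n \<Longrightarrow> (\<forall>m<n. i div dL ^ m mod dL = j div dL ^ m mod dL) \<Longrightarrow> i = j"
proof (induction n arbitrary: i j)
  case 0
  then show ?case by (simp add: less_Suc_eq)
next
  case (Suc n)
  have "i div dL < dL ^ n" "j div dL < dL ^ n" using Suc.prems(1,2)
    by (simp_all add: less_mult_imp_div_less mult.commute)
  moreover have "\<forall>m<n. i div dL div dL ^ m mod dL = j div dL div dL ^ m mod dL"
  proof (intro allI impI)
    fix m assume "m < n"
    then have "i div dL ^ Suc m mod dL = j div dL ^ Suc m mod dL" using Suc.prems(3) by auto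
    then show "i div dL div dL ^ m mod dL = j div dL div dL ^ m mod dL"
      by (simp add: div_mult2_eq)
  qed
  ultimately have "i div dL = j div dL" by (rule Suc.IH)
  moreover have "i mod dL = j mod dL" using Suc.prems(3)[rule_format, of 0] by simp
  ultimately show ?case by (metis div_mult_mod_eq)
qed

definition zl :: "nat \<Rightarrow> nat \<Rightarrow> nat \<times> nat" where
  "zl n = restrict (\<lambda>k. (0,0)) {..<n}"

lemma zl_in: "dL > 0 \<Longrightarrow> zl n \<in> pauli_labels dL n"
  by (auto simp: zl_def pauli_labels_def)

lemma Weyl_zl:
  assumes "dL > 0" "i < dL ^ n" "j < dL ^ n"
  shows "Weyl dL n (zl n) i j = idm i j"
proof -
  have "Weyl dL n (zl n) i j = (\<Prod>k<n. if digit dL n k i = digit dL n k j then 1 else 0)"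
    unfolding Weyl_def
    by (rule prod.cong) (auto simp: zl_def D1_eq digit_lt assms(1))
  also have "\<dots> = idm i j"
  proof (cases "\<forall>k<n. digit dL n k i = digit dL n k j")
    case True
    have "i = j"
    proof (rule digits_inj[OF assms])
      show "\<forall>m<n. i div dL ^ m mod dL = j div dL ^ m mod dL"
      proof (intro allI impI)
        fix m assume m: "m < n"
        then have "digit dL n (n - 1 - m) i = digit dL n (n - 1 - m) j" using True by auto
        moreover have "n - 1 - (n - 1 - m) = m" using m by simp
        ultimately show "i div dL ^ m mod dL = j div dL ^ m mod dL" by (simp add: digit_def)
      qed
    qed
    then show ?thesis using True by (simp add: idm_def)
  next
    case False
    then obtain k where "k < n" "digit dL n k i \<noteq> digit dL n k j" by auto
    then have "(\<Prod>k<n. if digit dL n k i = digit dL n k j then 1 else 0) = (0::complex)"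
      by (intro prod_zero) auto
    moreover have "i \<noteq> j" using False by auto
    ultimately show ?thesis by (simp add: idm_def)
  qed
  finally show ?thesis .
qed

definition G :: "nat \<Rightarrow> (nat \<Rightarrow> nat \<Rightarrow> complex) \<Rightarrow> (nat \<Rightarrow> nat \<Rightarrow> complex) \<Rightarrow> (nat \<Rightarrow> nat \<Rightarrow> complex) \<Rightarrow> complex" where
  "G d U A B = (\<Sum>i<d. \<Sum>k<d. cnj (A k i) * (\<Sum>l<d. U k l * (\<Sum>m<d. B l m * cnj (U i m))))"

lemma T_eq: "mtrace d (mmult d (madj A) (mmult d U (mmult d B (madj U)))) = G d U A B"
  by (simp add: mtrace_def mmult_def madj_def G_def)

lemma G_cong: "(\<And>l m. l < d \<Longrightarrow> m < d \<Longrightarrow> B l m = B' l m) \<Longrightarrow> G d U A B = G d U A B'"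
  unfolding G_def by (intro sum.cong refl) auto

lemma G_scale: "G d U A (\<lambda>l m. c * B l m) = c * G d U A B"
  unfolding G_def by (simp add: sum_distrib_left algebra_simps)

lemma channel_kb:
  assumes "i < d" "j < d"
  shows "unitary_channel d U (ket_bra i j) p' p = U p' i * cnj (U p j)"
proof -
  have "unitary_channel d U (ket_bra i j) p' p = (\<Sum>m<d. if m = j then U p' i * cnj (U p j) else 0)"
    unfolding unitary_channel_def mmult_def madj_def
  proof (rule sum.cong)
    fix m assume "m \<in> {..<d}"
    have "(\<Sum>l<d. U p' l * ket_bra i j l m) = (\<Sum>l<d. if l = i then (if m = j then U p' i else 0) else 0)"
      by (rule sum.cong) (auto simp: ket_bra_def)
    also have "\<dots> = (if m = j then U p' i else 0)" using assms by simp
    finally show "(\<Sum>l<d. U p' l * ket_bra i j l m) * cnj (U p m) = (if m = j then U p' i * cnj (U p j) else 0)"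
      by simp
  qed simp
  also have "\<dots> = U p' i * cnj (U p j)" using assms by simp
  finally show ?thesis .
qed

lemma choi_eq:
  assumes "q' < d" "q < d"
  shows "choi d (unitary_channel d U) (p',q') (p,q) = 1 / of_nat d * (U p' q' * cnj (U p q))"
proof -
  have "(\<Sum>i<d. \<Sum>j<d. tensor (unitary_channel d U (ket_bra i j)) (ket_bra i j) (p',q') (p,q))
     = (\<Sum>i<d. \<Sum>j<d. if j = q then (if i = q' then U p' q' * cnj (U p q) else 0) else 0)"
  proof (intro sum.cong refl)
    fix i j assume "i \<in> {..<d}" "j \<in> {..<d}"
    then have "unitary_channel d U (ket_bra i j) p' p = U p' i * cnj (U p j)" by (simp add: channel_kb)
    then show "tensor (unitary_channel d U (ket_bra i j)) (ket_bra i j) (p',q') (p,q) =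
      (if j = q then (if i = q' then U p' q' * cnj (U p q) else 0) else 0)"
      by (simp add: tensor_def ket_bra_def)
  qed
  also have "\<dots> = U p' q' * cnj (U p q)" using assms by simp
  finally show ?thesis by (simp add: choi_def)
qed

lemma sw: "(\<Sum>q\<in>S. \<Sum>p'\<in>T. \<Sum>q'\<in>R. F q p' q') = (\<Sum>p'\<in>T. \<Sum>q'\<in>R. \<Sum>q\<in>S. F q p' q')"
proof -
  have "(\<Sum>q\<in>S. \<Sum>p'\<in>T. \<Sum>q'\<in>R. F q p' q') = (\<Sum>p'\<in>T. \<Sum>q\<in>S. \<Sum>q'\<in>R. F q p' q')"
    by (rule sum.swap)
  also have "\<dots> = (\<Sum>p'\<in>T. \<Sum>q'\<in>R. \<Sum>q\<in>S. F q p' q')"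
    by (rule sum.cong[OF refl], rule sum.swap)
  finally show ?thesis .
qed

lemma tr2_eq:
  "mtrace2 d (mmult2 d (tensor (madj A) (madj B)) (choi d (unitary_channel d U)))
    = 1 / of_nat d * G d U A (\<lambda>l m. cnj (B l m))"
proof -
  have "mtrace2 d (mmult2 d (tensor (madj A) (madj B)) (choi d (unitary_channel d U)))
     = (\<Sum>p<d. \<Sum>q<d. \<Sum>p'<d. \<Sum>q'<d. 1 / of_nat d * (cnj (A p' p) * U p' q' * cnj (B q' q) * cnj (U p q)))"
    unfolding mtrace2_def mmult2_def
    by (intro sum.cong refl) (simp add: tensor_def madj_def choi_eq)
  also have "\<dots> = (\<Sum>p<d. \<Sum>p'<d. \<Sum>q'<d. \<Sum>q<d. 1 / of_nat d * (cnj (A p' p) * U p' q' * cnj (B q' q) * cnj (U p q)))"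
    by (rule sum.cong[OF refl], rule sw)
  also have "\<dots> = 1 / of_nat d * G d U A (\<lambda>l m. cnj (B l m))"
    unfolding G_def by (simp add: sum_distrib_left algebra_simps)
  finally show ?thesis .
qed

lemma G_cong2: "(\<And>l m. l < d \<Longrightarrow> m < d \<Longrightarrow> A l m = A' l m) \<Longrightarrow> (\<And>l m. l < d \<Longrightarrow> m < d \<Longrightarrow> B l m = B' l m) \<Longrightarrow> G d U A B = G d U A' B'"
  unfolding G_def by (intro sum.cong refl) auto

lemma G_idm:
  assumes "unitary_mat d U"
  shows "G d U idm idm = of_nat d"
proof -
  have "G d U idm idm = (\<Sum>i<d. \<Sum>l<d. U i l * cnj (U i l))"
    unfolding G_def
  proof (rule sum.cong[OF refl])
    fix i assume i: "i \<in> {..<d}"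
    have "(\<Sum>k<d. cnj (idm k i) * (\<Sum>l<d. U k l * (\<Sum>m<d. idm l m * cnj (U i m))))
       = (\<Sum>k<d. if k = i then (\<Sum>l<d. U i l * cnj (U i l)) else 0)"
    proof (rule sum.cong[OF refl])
      fix k assume "k \<in> {..<d}"
      have "(\<Sum>l<d. U k l * (\<Sum>m<d. idm l m * cnj (U i m))) = (\<Sum>l<d. U k l * cnj (U i l))"
      proof (rule sum.cong[OF refl])
        fix l assume l: "l \<in> {..<d}"
        have "(\<Sum>m<d. idm l m * cnj (U i m)) = (\<Sum>m<d. if l = m then cnj (U i m) else 0)"
          by (rule sum.cong[OF refl]) (simp add: idm_def)
        also have "\<dots> = cnj (U i l)" using l by simp
        finally show "U k l * (\<Sum>m<d. idm l m * cnj (U i m)) = U k l * cnj (U i l)" by simp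
      qed
      then show "cnj (idm k i) * (\<Sum>l<d. U k l * (\<Sum>m<d. idm l m * cnj (U i m))) =
          (if k = i then (\<Sum>l<d. U i l * cnj (U i l)) else 0)"
        by (simp add: idm_def)
    qed
    also have "\<dots> = (\<Sum>l<d. U i l * cnj (U i l))" using i by simp
    finally show "(\<Sum>k<d. cnj (idm k i) * (\<Sum>l<d. U k l * (\<Sum>m<d. idm l m * cnj (U i m)))) = (\<Sum>l<d. U i l * cnj (U i l))" .
  qed
  also have "\<dots> = (\<Sum>l<d. \<Sum>i<d. cnj (U i l) * U i l)"
    by (subst sum.swap) (simp add: mult.commute)
  also have "\<dots> = (\<Sum>l<d. mmult d (madj U) U l l)"
    by (simp add: mmult_def madj_def)
  also have "\<dots> = (\<Sum>l<d. 1)"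
    using assms by (intro sum.cong refl) (simp add: unitary_mat_def idm_def)
  finally show ?thesis by simp
qed

lemma sq_powr: "(c::real) \<ge> 0 \<Longrightarrow> (c ^ 2) powr a = c powr (2 * a)"
proof (cases "c = 0")
  case False
  assume "c \<ge> 0"
  then have c: "c > 0" using False by simp
  have "c ^ 2 = c powr (real 2)" using powr_realpow[OF c, of 2] by simp
  then show ?thesis by (simp add: powr_powr)
qed simp


lemma aux: "(x::real) * (k * y - l) = (x * k) * y - x * l"
  by (simp add: algebra_simps)

theorem theorem4:
  fixes dL n :: nat and \<alpha> :: real and U :: "nat \<Rightarrow> nat \<Rightarrow> complex"
  assumes "dL \<ge> 2" and "n \<ge> 1" and "\<alpha> > 0" and "\<alpha> \<noteq> 1"
    and "unitary_mat (dL ^ n) U"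
  shows "clifford_entropy dL n \<alpha> U =
    1 / (\<alpha> - 1) * (1 - exp (- (\<alpha> - 1) *
       stab_renyi dL n \<alpha> (choi (dL ^ n) (unitary_channel (dL ^ n) U))))"
proof -
  define d where "d = dL ^ n"
  have dL0: "dL > 0" using assms(1) by simp
  have d0: "d > 0" using dL0 by (simp add: d_def)
  define W where "W = Weyl dL n"
  define P where "P = pauli_labels dL n"
  have finP: "finite P" by (simp add: P_def pauli_labels_def finite_PiE)
  define c where "c = (\<lambda>a b. cmod (1 / of_nat d * mtrace d (mmult d (madj (W a))
             (mmult d U (mmult d (W b) (madj U))))))"
  define S where "S = (\<Sum>a\<in>P. \<Sum>b\<in>P. c a b powr (2 * \<alpha>))"
  define \<rho> where "\<rho> = choi d (unitary_channel d U)"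
  have cG: "c a b = cmod (1 / of_nat d * G d U (W a) (W b))" for a b
    by (simp add: c_def T_eq)
  have chi_eq: "chi dL n \<rho> a b = 1 / (real d)^2 * (c a (fl dL n b))^2" if b: "b \<in> P" for a b
  proof -
    have "G d U (W a) (\<lambda>l m. cnj (W b l m)) = G d U (W a) (\<lambda>l m. Theta dL n b * W (fl dL n b) l m)"
      using b by (intro G_cong) (simp add: W_def P_def Weyl_cnj dL0)
    also have "\<dots> = Theta dL n b * G d U (W a) (W (fl dL n b))" by (rule G_scale)
    finally have "cmod (mtrace2 d (mmult2 d (tensor (madj (W a)) (madj (W b))) \<rho>)) = c a (fl dL n b)"
      by (simp add: \<rho>_def tr2_eq cG norm_mult norm_divide cmod_Theta)
    then show ?thesis by (simp add: chi_def d_def W_def Let_def)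
  qed
  have chi_pow: "chi dL n \<rho> a b powr \<alpha> = (1 / (real d)^2) powr \<alpha> * c a (fl dL n b) powr (2 * \<alpha>)"
    if "b \<in> P" for a b
  proof -
    have nn: "c a (fl dL n b) \<ge> 0" by (simp add: c_def)
    show ?thesis
      apply (subst chi_eq[OF that])
      apply (subst powr_mult)
      using nn by (simp_all add: sq_powr)
  qed
  have sumchi: "(\<Sum>a\<in>P. \<Sum>b\<in>P. chi dL n \<rho> a b powr \<alpha>) = (1 / (real d)^2) powr \<alpha> * S"
  proof -
    have "(\<Sum>a\<in>P. \<Sum>b\<in>P. chi dL n \<rho> a b powr \<alpha>)
        = (\<Sum>a\<in>P. \<Sum>b\<in>P. (1 / (real d)^2) powr \<alpha> * c a (fl dL n b) powr (2 * \<alpha>))"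
      by (intro sum.cong refl) (simp add: chi_pow)
    also have "\<dots> = (1 / (real d)^2) powr \<alpha> * (\<Sum>a\<in>P. \<Sum>b\<in>P. c a (fl dL n b) powr (2 * \<alpha>))"
      by (simp add: sum_distrib_left)
    also have "(\<Sum>a\<in>P. \<Sum>b\<in>P. c a (fl dL n b) powr (2 * \<alpha>)) = S"
      unfolding S_def P_def
      by (rule sum.cong[OF refl], rule sum_fl[OF dL0, where g="\<lambda>b. c _ b powr (2 * \<alpha>)"])
    finally show ?thesis .
  qed
  have zlP: "zl n \<in> P" by (simp add: P_def zl_in dL0)
  have c00: "c (zl n) (zl n) = 1"
  proof -
    have "G d U (W (zl n)) (W (zl n)) = G d U idm idm"
      by (intro G_cong2) (simp_all add: W_def Weyl_zl dL0 d_def)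
    also have "\<dots> = of_nat d" using assms(5) by (simp add: G_idm d_def)
    finally show ?thesis using d0 by (simp add: cG)
  qed
  have nnp: "0 \<le> c a b powr (2 * \<alpha>)" for a b by simp
  have "0 < (\<Sum>b\<in>P. c (zl n) b powr (2 * \<alpha>))"
    by (rule sum_pos2[OF finP zlP]) (simp_all add: c00 nnp)
  then have Spos: "S > 0"
    unfolding S_def
    by (rule sum_pos2[OF finP zlP]) (simp add: sum_nonneg nnp)
  define L where "L = ln ((real d)^2)"
  have lnK: "ln ((1 / (real d)^2) powr \<alpha>) = - \<alpha> * L"
    using d0 by (simp add: L_def ln_powr ln_div)
  have Kpos: "(1 / (real d)^2) powr \<alpha> > 0" using d0 by simp
  have stab: "stab_renyi dL n \<alpha> \<rho> = 1 / (1 - \<alpha>) * (- \<alpha> * L + ln S) - L"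
    unfolding stab_renyi_def d_def[symmetric] sumchi[unfolded P_def] L_def[symmetric]
    by (simp only: ln_mult_pos[OF Kpos Spos] lnK)
  have a1: "- (\<alpha> - 1) * (1 / (1 - \<alpha>)) = 1" using assms(4) by (simp add: field_simps)
  have "- (\<alpha> - 1) * stab_renyi dL n \<alpha> \<rho> = (- (\<alpha> - 1) * (1 / (1 - \<alpha>))) * (- \<alpha> * L + ln S) - (- (\<alpha> - 1)) * L"
    unfolding stab by (rule aux)
  also have "\<dots> = ln S - L" unfolding a1 by (simp add: algebra_simps)
  finally have ee: "- (\<alpha> - 1) * stab_renyi dL n \<alpha> \<rho> = ln S - L" .
  have "exp (ln S - L) = S / (real d)^2"
    using Spos d0 by (simp add: exp_diff L_def)
  then have e: "exp (- (\<alpha> - 1) * stab_renyi dL n \<alpha> \<rho>) = S / (real d)^2"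
    by (simp only: ee)
  have Seq: "S = (\<Sum>a\<in>pauli_labels dL n. \<Sum>b\<in>pauli_labels dL n.
          cmod (1 / of_nat d * mtrace d (mmult d (madj (Weyl dL n a))
             (mmult d U (mmult d (Weyl dL n b) (madj U))))) powr (2 * \<alpha>))"
    by (simp add: S_def c_def P_def W_def)
  show ?thesis
    unfolding clifford_entropy_def Let_def d_def[symmetric] Seq[symmetric] \<rho>_def[symmetric] e
    by simp
qed

end
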